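(* Let $\mathcal{P}\subset\mathbb{R}^d$ be a finite set of $n$ item vectors, $\bm{q}\in\mathbb{R}^d$, $k>1$ an integer with $k\le n$, $\lambda\in[0,1]$, $\mu>0$, and assume $\langle\bm{x},\bm{y}\rangle\ge0$ for all $\bm{x},\bm{y}\in\mathcal{P}\cup\{\bm{q}\}$. Let $\mathcal{S}^*\in\arg\max_{\mathcal{T}\subseteq\mathcal{P},|\mathcal{T}|=k}f_{avg}(\mathcal{T})$ and let $\mathcal{S}$ be the output of the DualGreedy algorithm run with $f=f_{avg}$. Then $$f_{avg}(\mathcal{S})\ \ge\ \tfrac14 f_{avg}(\mathcal{S}^* )-\tfrac34\,div^*_{max},\qquad div^*_{max}=\max_{\bm{p}_x,\bm{p}_y\in\mathcal{P},\,\bm{p}_x\ne\bm{p}_y}\mu(1-\lambda)\langle\bm{p}_x,\bm{p}_y\rangle.$$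
   Context: For $\mathcal{S}\subseteq\mathcal{P}$, $f_{avg}(\mathcal{S}) = \frac{\lambda}{k}\sum_{\bm{p}\in\mathcal{S}}\langle\bm{p},\bm{q}\rangle - \frac{2\mu(1-\lambda)}{k(k-1)}\sum_{\{\bm{p},\bm{p}'\}\subseteq\mathcal{S},\,\bm{p}\neq\bm{p}'}\langle\bm{p},\bm{p}'\rangle$ (unordered pairs of distinct elements), and the marginal gain is $\Delta_f(\bm{p},\mathcal{S}) = f_{avg}(\mathcal{S}\cup\{\bm{p}\})-f_{avg}(\mathcal{S}) = \frac{\lambda}{k}\langle\bm{p},\bm{q}\rangle - \frac{2\mu(1-\lambda)}{k(k-1)}\sum_{\bm{p}'\in\mathcal{S}}\langle\bm{p},\bm{p}'\rangle$ for $\bm{p}\notin\mathcal{S}$. DualGreedy algorithm: initialize $\mathcal{S}_1=\mathcal{S}_2=\varnothing$. While $|\mathcal{S}_1|<k$ or $|\mathcal{S}_2|<k$: for each $j\in\{1,2\}$ with $|\mathcal{S}_j|<k$, let $\bm{p}_j^*\in\arg\max_{\bm{p}\in\mathcal{P}\setminus(\mathcal{S}_1\cup\mathcal{S}_2)}\Delta_f(\bm{p},\mathcal{S}_j)$ (if $|\mathcal{S}_j|=k$, $\bm{p}_j^*$ is undefined and its gain is treated as $-\infty$); if $\max_{j}\Delta_f(\bm{p}_j^*,\mathcal{S}_j)\le0$, stop; otherwise, if $\Delta_f(\bm{p}_1^*,\mathcal{S}_1)\ge\Delta_f(\bm{p}_2^*,\mathcal{S}_2)$ add $\bm{p}_1^*$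 to $\mathcal{S}_1$, else add $\bm{p}_2^*$ to $\mathcal{S}_2$. Output $\mathcal{S}\in\arg\max_{j\in\{1,2\}}f_{avg}(\mathcal{S}_j)$ (a set of at most $k$ items). *)

theory Defs
  imports "HOL-Analysis.Analysis"
begin

text \<open>Objective f_avg. The sum over unordered pairs of distinct elements of S
  is written as one half of the sum over ordered pairs of distinct elements.\<close>
definition favg :: "real \<Rightarrow> real \<Rightarrow> nat \<Rightarrow> 'a::real_inner \<Rightarrow> 'a set \<Rightarrow> real" where
  "favg lam mu k q S =
     lam / real k * (\<Sum>p\<in>S. inner p q)
     - (2 * mu * (1 - lam)) / (real k * (real k - 1))
         * ((1/2) * (\<Sum>p\<in>S. \<Sum>p'\<in>S - {p}. inner p p'))"

definition gain :: "real \<Rightarrow> real \<Rightarrow> nat \<Rightarrow> 'a::real_inner \<Rightarrow> 'a \<Rightarrow> 'a set \<Rightarrow> real" where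
  "gain lam mu k q p S = favg lam mu k q (insert p S) - favg lam mu k q S"

text \<open>Ties between the two sets go to S1; the chosen element must be an argmax
  of the marginal gain for its set, with positive gain.\<close>
inductive dg_step :: "'a set \<Rightarrow> real \<Rightarrow> real \<Rightarrow> nat \<Rightarrow> 'a::real_inner
     \<Rightarrow> 'a set \<times> 'a set \<Rightarrow> 'a set \<times> 'a set \<Rightarrow> bool"
  for P lam mu k q where
  add1: "\<lbrakk> card S1 < k; p \<in> P - (S1 \<union> S2);
          \<forall>p'\<in>P - (S1 \<union> S2). gain lam mu k q p' S1 \<le> gain lam mu k q p S1;
          gain lam mu k q p S1 > 0;
          card S2 < k \<longrightarrow> (\<forall>p'\<in>P - (S1 \<union> S2). gain lam mu k q p' S2 \<le> gain lam mu k q p S1) \<rbrakk>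
        \<Longrightarrow> dg_step P lam mu k q (S1, S2) (insert p S1, S2)"
| add2: "\<lbrakk> card S2 < k; p \<in> P - (S1 \<union> S2);
          \<forall>p'\<in>P - (S1 \<union> S2). gain lam mu k q p' S2 \<le> gain lam mu k q p S2;
          gain lam mu k q p S2 > 0;
          card S1 < k \<longrightarrow> (\<forall>p'\<in>P - (S1 \<union> S2). gain lam mu k q p' S1 < gain lam mu k q p S2) \<rbrakk>
        \<Longrightarrow> dg_step P lam mu k q (S1, S2) (S1, insert p S2)"

text \<open>Halting: both sets full, or every available best gain (for non-full sets)
  is \<le> 0 (an empty candidate set counts as gain -\<infinity>).\<close>
definition dg_halted :: "'a set \<Rightarrow> real \<Rightarrow> real \<Rightarrow> nat \<Rightarrow> 'a::real_inner \<Rightarrow> 'a set \<Rightarrow> 'a set \<Rightarrow> bool" where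
  "dg_halted P lam mu k q S1 S2 \<longleftrightarrow>
     (card S1 < k \<longrightarrow> (\<forall>p\<in>P - (S1 \<union> S2). gain lam mu k q p S1 \<le> 0)) \<and>
     (card S2 < k \<longrightarrow> (\<forall>p\<in>P - (S1 \<union> S2). gain lam mu k q p S2 \<le> 0))"

text \<open>S is a possible output of DualGreedy (for some admissible tie-breaking).\<close>
definition dual_greedy_output :: "'a set \<Rightarrow> real \<Rightarrow> real \<Rightarrow> nat \<Rightarrow> 'a::real_inner \<Rightarrow> 'a set \<Rightarrow> bool" where
  "dual_greedy_output P lam mu k q S \<longleftrightarrow>
     (\<exists>S1 S2. (dg_step P lam mu k q)\<^sup>*\<^sup>* ({}, {}) (S1, S2) \<and> dg_halted P lam mu k q S1 S2 \<and>
        ((S = S1 \<and> favg lam mu k q S2 \<le> favg lam mu k q S1) \<or>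
         (S = S2 \<and> favg lam mu k q S1 \<le> favg lam mu k q S2)))"

definition div_max :: "'a set \<Rightarrow> real \<Rightarrow> real \<Rightarrow> 'a::real_inner \<Rightarrow> real" where
  "div_max P lam mu q = Max {mu * (1 - lam) * inner px py | px py. px \<in> P \<and> py \<in> P \<and> px \<noteq> py}"

end

theory Submission
  imports Defs
begin

definition Wsum :: "'a::real_inner set \<Rightarrow> real" where
  "Wsum S = (\<Sum>p\<in>S. \<Sum>p'\<in>S - {p}. inner p p')"

lemma favg_alt:
  "favg lam mu k q S = lam / real k * (\<Sum>p\<in>S. inner p q)
     - (mu * (1 - lam)) / (real k * (real k - 1)) * Wsum S"
proof -
  have "2 * mu * (1 - lam) / (real k * (real k - 1)) * (1 / 2 * X)
      = mu * (1 - lam) / (real k * (real k - 1)) * X" for X :: real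
    by (simp add: divide_simps)
  then show ?thesis unfolding favg_def Wsum_def by simp
qed

lemma Wsum_insert:
  assumes "finite S" "p \<notin> S"
  shows "Wsum (insert p S) = Wsum S + 2 * (\<Sum>y\<in>S. inner p y)"
proof -
  have "Wsum (insert p S) = (\<Sum>y\<in>insert p S - {p}. inner p y)
        + (\<Sum>x\<in>S. \<Sum>y\<in>insert p S - {x}. inner x y)"
    unfolding Wsum_def using assms by (simp add: sum.insert)
  also have "(\<Sum>y\<in>insert p S - {p}. inner p y) = (\<Sum>y\<in>S. inner p y)"
    using assms by simp
  also have "(\<Sum>x\<in>S. \<Sum>y\<in>insert p S - {x}. inner x y)
      = (\<Sum>x\<in>S. inner x p + (\<Sum>y\<in>S - {x}. inner x y))"
  proof (rule sum.cong[OF refl])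
    fix x assume "x \<in> S"
    then have "insert p S - {x} = insert p (S - {x})" "p \<notin> S - {x}" using assms by auto
    then show "(\<Sum>y\<in>insert p S - {x}. inner x y) = inner x p + (\<Sum>y\<in>S - {x}. inner x y)"
      using assms by (simp add: sum.insert)
  qed
  also have "\<dots> = (\<Sum>y\<in>S. inner p y) + Wsum S"
    unfolding Wsum_def by (simp add: sum.distrib inner_commute)
  finally show ?thesis by simp
qed

lemma lin2_aux: fixes x fo fs d :: real
  shows "x \<le> 3 * (fs + d) \<Longrightarrow> fo \<le> x \<Longrightarrow> 0 \<le> fs \<Longrightarrow> 0 \<le> d
      \<Longrightarrow> 1/4 * fo - 3/4 * d \<le> fs" by (simp add: field_simps)

locale dgl =
  fixes P :: "'a::real_inner set" and lam mu :: real and k :: nat and q :: 'a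
  assumes finP: "finite P" and k1: "1 < k" and kP: "k \<le> card P"
    and lam0: "0 \<le> lam" and lam1: "lam \<le> 1" and mu0: "0 < mu"
    and nonneg: "\<forall>x\<in>insert q P. \<forall>y\<in>insert q P. 0 \<le> inner x y"
begin

abbreviation "c \<equiv> mu * (1 - lam)"
abbreviation "K \<equiv> real k"
abbreviation "D \<equiv> div_max P lam mu q"
definition "a p = lam / real k * inner p q"
abbreviation "f \<equiv> favg lam mu k q"
abbreviation "g \<equiv> gain lam mu k q"

definition "Q = K * (K - 1)"
lemma c0: "0 \<le> c" using mu0 lam1 by simp
lemma KK: "0 < Q" using k1 by (simp add: Q_def)
lemma Qne: "Q \<noteq> 0" using KK by simp
lemma KKne: "K * (K - 1) \<noteq> 0" "K * K - K \<noteq> 0" "K \<noteq> 0" using k1 by (auto simp: algebra_simps)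

lemma ip0: "x \<in> P \<Longrightarrow> y \<in> P \<Longrightarrow> 0 \<le> inner x y" using nonneg by auto
lemma a0: "x \<in> P \<Longrightarrow> 0 \<le> a x"
  using nonneg lam0 unfolding a_def by auto

lemma Dset_fin: "finite {c * inner px py | px py. px \<in> P \<and> py \<in> P \<and> px \<noteq> py}"
proof -
  have "{c * inner px py | px py. px \<in> P \<and> py \<in> P \<and> px \<noteq> py}
        \<subseteq> (\<lambda>(x,y). c * inner x y) ` (P \<times> P)" by auto
  moreover have "finite ((\<lambda>(x,y). c * inner x y) ` (P \<times> P))" using finP by simp
  ultimately show ?thesis by (rule finite_subset)
qed

lemma Dle: "x \<in> P \<Longrightarrow> y \<in> P \<Longrightarrow> x \<noteq> y \<Longrightarrow> c * inner x y \<le> D"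
  unfolding div_max_def using Dset_fin by (intro Max_ge) auto

lemma D0: "0 \<le> D"
proof -
  have "card P \<ge> 2" using k1 kP by simp
  then obtain x where "x \<in> P" by fastforce
  have "card (P - {x}) \<ge> 1" using \<open>card P \<ge> 2\<close> \<open>x \<in> P\<close> finP by (simp add: card_Diff_singleton)
  then have "P - {x} \<noteq> {}" by (metis card.empty not_one_le_zero)
  then obtain y where "y \<in> P - {x}" by blast
  then have "x \<in> P" "y \<in> P" "x \<noteq> y" using \<open>x \<in> P\<close> by auto
  then have "c * inner x y \<le> D" by (rule Dle)
  moreover have "0 \<le> c * inner x y" using c0 ip0 \<open>x \<in> P\<close> \<open>y \<in> P\<close> by simp
  ultimately show ?thesis by simp
qed

lemma Wsum0: "S \<subseteq> P \<Longrightarrow> 0 \<le> Wsum S"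
  unfolding Wsum_def by (intro sum_nonneg) (auto intro!: ip0)

lemma cWsum: assumes "S \<subseteq> P" "finite S"
  shows "c * Wsum S \<le> real (card S) * (real (card S) - 1) * D"
proof -
  have "c * Wsum S = (\<Sum>p\<in>S. \<Sum>p'\<in>S - {p}. c * inner p p')"
    unfolding Wsum_def by (simp add: sum_distrib_left)
  also have "\<dots> \<le> (\<Sum>p\<in>S. \<Sum>p'\<in>S - {p}. D)"
    using assms by (intro sum_mono Dle) auto
  also have "\<dots> = (\<Sum>p\<in>S. (real (card S) - 1) * D)"
  proof (intro sum.cong refl)
    fix x assume x: "x \<in> S"
    then have "card S \<ge> 1" using assms(2) by (metis card_0_eq empty_iff less_one not_le)
    then show "(\<Sum>p'\<in>S - {x}. D) = (real (card S) - 1) * D"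
      using x assms(2) by (simp add: card_Diff_singleton of_nat_diff)
  qed
  also have "\<dots> = real (card S) * (real (card S) - 1) * D" by simp
  finally show ?thesis .
qed

lemma f_le_A: assumes "S \<subseteq> P" shows "f S \<le> (\<Sum>p\<in>S. a p)"
proof -
  have "0 \<le> c / Q * Wsum S"
    using c0 KK Wsum0[OF assms] by simp
  then show ?thesis unfolding favg_alt a_def Q_def[symmetric] by (simp add: sum_distrib_left)
qed

lemma f_ge_A: assumes "S \<subseteq> P" "card S \<le> k" shows "(\<Sum>p\<in>S. a p) - D \<le> f S"
proof -
  have fin: "finite S" using assms finP finite_subset by blast
  have "c * Wsum S \<le> real (card S) * (real (card S) - 1) * D" by (rule cWsum[OF assms(1) fin])
  also have "\<dots> \<le> K * (K - 1) * D"
  proof (intro mult_right_mono D0)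
    define s where "s = real (card S)"
    have "s \<le> K" "0 \<le> s" using assms(2) s_def by auto
    then have "0 \<le> (K - s) * (K + s - 1)" using k1 by (intro mult_nonneg_nonneg) auto
    then show "real (card S) * (real (card S) - 1) \<le> K * (K - 1)"
      unfolding s_def[symmetric] by (simp add: algebra_simps)
  qed
  finally have "c * Wsum S \<le> Q * D" unfolding Q_def .
  then have "c * Wsum S / Q \<le> D" using KK by (simp add: divide_le_eq mult.commute)
  then show ?thesis unfolding favg_alt a_def Q_def[symmetric] by (simp add: sum_distrib_left)
qed

lemma gain_ge: assumes "S \<subseteq> P" "z \<in> P" "z \<notin> S"
  shows "a z - 2 * real (card S) * D / Q \<le> g z S"
proof -
  have fin: "finite S" using assms finP finite_subset by blast
  have aux: "(x1 - y * w1) - (x2 - y * w2) = (x1 - x2) - y * (w1 - w2)" for x1 x2 y w1 w2 :: real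
    by (simp add: algebra_simps)
  have "f (insert z S) - f S = lam / K * inner z q - c / (K * (K - 1)) * (2 * (\<Sum>y\<in>S. inner z y))"
    unfolding favg_alt aux using Wsum_insert[OF fin assms(3)] fin assms(3) by (simp add: diff_divide_distrib[symmetric] distrib_left)
  then have "g z S = a z - c / Q * (2 * (\<Sum>y\<in>S. inner z y))"
    by (simp add: gain_def a_def Q_def)
  moreover have "c * (\<Sum>y\<in>S. inner z y) \<le> real (card S) * D"
  proof -
    have "c * (\<Sum>y\<in>S. inner z y) = (\<Sum>y\<in>S. c * inner z y)" by (simp add: sum_distrib_left)
    also have "\<dots> \<le> (\<Sum>y\<in>S. D)" using assms by (intro sum_mono Dle) auto
    finally show ?thesis by simp
  qed
  ultimately show ?thesis using KK by (simp add: field_simps Qne)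
qed

definition "inv1 S z \<longleftrightarrow> real (card S) * a z - D * real (card S) * (real (card S) - 1) / Q \<le> f S"

lemma inv1_step: assumes "S \<subseteq> P" "z \<in> P" "z \<notin> S" "p \<notin> S" "inv1 S z" "g z S \<le> g p S"
  shows "inv1 (insert p S) z"
proof -
  have fin: "finite S" using assms finP finite_subset by blast
  define s where "s = real (card S)"
  have cs: "real (card (insert p S)) = s + 1" using fin assms(4) s_def by simp
  have fi: "f (insert p S) = f S + g p S" unfolding gain_def by simp
  have h1: "s * a z - D * s * (s - 1) / Q \<le> f S" using assms(5) s_def inv1_def by simp
  have h2: "a z - 2 * s * D / Q \<le> g p S" using gain_ge[OF assms(1-3)] assms(6) s_def by simp
  have "(s + 1) * a z - D * (s + 1) * (s + 1 - 1) / Q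
     = (s * a z - D * s * (s - 1) / Q) + (a z - 2 * s * D / Q)"
    using KK by (simp add: field_simps Qne)
  then show ?thesis unfolding inv1_def cs fi using h1 h2 by linarith
qed

lemma inv1_final: assumes "S \<subseteq> P" "z \<in> P" "z \<notin> S" "inv1 S z" "card S \<le> k"
  "card S < k \<longrightarrow> g z S \<le> 0"
  shows "K * a z - D \<le> f S"
proof (cases "card S = k")
  case True
  have "D * K * (K - 1) / Q = D" using Qne unfolding Q_def by simp
  then show ?thesis using assms(4) True unfolding inv1_def by simp
next
  case False
  define s where "s = real (card S)"
  have sk: "s + 1 \<le> K" using False assms(5) s_def by simp
  have s0: "0 \<le> s" using s_def by simp
  have "a z - 2 * s * D / Q \<le> 0"
    using gain_ge[OF assms(1-3)] assms(6) False assms(5) s_def by simp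
  then have ha: "a z * Q \<le> 2 * s * D" using KK by (simp add: field_simps Qne)
  have h1: "s * a z - D * s * (s - 1) / Q \<le> f S" using assms(4) s_def inv1_def by simp
  have e1: "(K - s) * (a z * Q) \<le> (K - s) * (2 * s * D)"
    using ha sk by (intro mult_left_mono) auto
  have e2: "0 \<le> (K - s) * (K - s - 1) * D" using sk D0 by simp
  have e3: "(s * a z - D * s * (s - 1) / Q) * Q = s * a z * Q - D * s * (s - 1)"
    using KK by (simp add: field_simps Qne)
  have e4: "(K * a z - D) * Q = K * a z * Q - D * K * (K - 1)" unfolding Q_def by (simp add: algebra_simps)
  have e5: "(K - s) * (K - s - 1) * D = D * K * (K - 1) - D * s * (s - 1) - (K - s) * (2 * s * D)"
    by (simp add: algebra_simps)
  have e6: "(K - s) * (a z * Q) = K * a z * Q - s * a z * Q" by (simp add: algebra_simps)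
  have "(K * a z - D) * Q \<le> (s * a z - D * s * (s - 1) / Q) * Q"
    unfolding e3 e4 using e1 e2 e5 e6 by linarith
  then have "K * a z - D \<le> s * a z - D * s * (s - 1) / Q"
    using KK by simp
  then show ?thesis using h1 by linarith
qed

definition "Inv S1 S2 \<longleftrightarrow> S1 \<subseteq> P \<and> S2 \<subseteq> P \<and> S1 \<inter> S2 = {} \<and> card S1 \<le> k \<and> card S2 \<le> k
   \<and> 0 \<le> f S1 \<and> 0 \<le> f S2 \<and> (\<forall>z\<in>P - (S1 \<union> S2). inv1 S1 z \<and> inv1 S2 z)"

lemma Inv0: "Inv {} {}" unfolding Inv_def inv1_def favg_def by simp

lemma Inv_step: assumes "dg_step P lam mu k q st st'" "Inv (fst st) (snd st)"
  shows "Inv (fst st') (snd st')"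
  using assms(1)
proof cases
  case (add1 S1 p S2)
  have fin: "finite S1" using assms(2) add1 finP finite_subset unfolding Inv_def by auto
  have I: "Inv S1 S2" using assms(2) add1 by simp
  have "f (insert p S1) = f S1 + g p S1" unfolding gain_def by simp
  then have "0 \<le> f (insert p S1)" using I add1 unfolding Inv_def by simp
  moreover have "card (insert p S1) \<le> k" using add1 fin by (simp add: card_insert_if)
  moreover have "\<forall>z\<in>P - (insert p S1 \<union> S2). inv1 (insert p S1) z \<and> inv1 S2 z"
    using I add1 inv1_step[of S1 _ p] unfolding Inv_def by auto
  ultimately show ?thesis using I add1 unfolding Inv_def by auto
next
  case (add2 S2 p S1)
  have fin: "finite S2" using assms(2) add2 finP finite_subset unfolding Inv_def by auto
  have I: "Inv S1 S2" using assms(2) add2 by simp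
  have "f (insert p S2) = f S2 + g p S2" unfolding gain_def by simp
  then have "0 \<le> f (insert p S2)" using I add2 unfolding Inv_def by simp
  moreover have "card (insert p S2) \<le> k" using add2 fin by (simp add: card_insert_if)
  moreover have "\<forall>z\<in>P - (S1 \<union> insert p S2). inv1 S1 z \<and> inv1 (insert p S2) z"
    using I add2 inv1_step[of S2 _ p] unfolding Inv_def by auto
  ultimately show ?thesis using I add2 unfolding Inv_def by auto
qed

lemma Inv_reach: assumes "(dg_step P lam mu k q)\<^sup>*\<^sup>* ({}, {}) st" shows "Inv (fst st) (snd st)"
  using assms
proof (induction rule: rtranclp_induct)
  case base then show ?case using Inv0 by simp
next
  case (step y z) then show ?case using Inv_step by blast
qed

end

theorem theorem2:
  fixes P :: "'a::euclidean_space set" and q :: 'a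
    and k :: nat and lam mu :: real and S Sstar :: "'a set"
  assumes "finite P"
    and "1 < k" and "k \<le> card P"
    and "0 \<le> lam" and "lam \<le> 1" and "0 < mu"
    and "\<forall>x\<in>insert q P. \<forall>y\<in>insert q P. 0 \<le> inner x y"
    and "Sstar \<subseteq> P" and "card Sstar = k"
    and "\<forall>T. T \<subseteq> P \<and> card T = k \<longrightarrow> favg lam mu k q T \<le> favg lam mu k q Sstar"
    and "dual_greedy_output P lam mu k q S"
  shows "favg lam mu k q S \<ge> 1/4 * favg lam mu k q Sstar - 3/4 * div_max P lam mu q"
proof -
  interpret dgl P lam mu k q using assms(1-7) by unfold_locales
  obtain S1 S2 where run: "(dg_step P lam mu k q)\<^sup>*\<^sup>* ({}, {}) (S1, S2)"
    and halt: "dg_halted P lam mu k q S1 S2"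
    and out: "(S = S1 \<and> f S2 \<le> f S1) \<or> (S = S2 \<and> f S1 \<le> f S2)"
    using assms(11) unfolding dual_greedy_output_def by blast
  have I: "Inv S1 S2" using Inv_reach[OF run] by simp
  define F where "F = f S"
  have F1: "f S1 \<le> F" and F2: "f S2 \<le> F" and F0: "0 \<le> F"
    using out I unfolding F_def Inv_def by auto
  define Ot where "Ot = Sstar"
  have finO: "finite Ot" using assms(1,8) Ot_def finite_subset by blast
  have S1P: "S1 \<subseteq> P" and S2P: "S2 \<subseteq> P" and c1: "card S1 \<le> k" and c2: "card S2 \<le> k"
    using I unfolding Inv_def by auto
  have finS1: "finite S1" using S1P assms(1) finite_subset by blast
  have finS2: "finite S2" using S2P assms(1) finite_subset by blast
  have A1: "(\<Sum>p\<in>Ot \<inter> S1. a p) \<le> F + D"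
  proof -
    have "(\<Sum>p\<in>Ot \<inter> S1. a p) \<le> (\<Sum>p\<in>S1. a p)"
      using finS1 S1P a0 by (intro sum_mono2) auto
    then show ?thesis using f_ge_A[OF S1P c1] F1 by linarith
  qed
  have A2: "(\<Sum>p\<in>(Ot - S1) \<inter> S2. a p) \<le> F + D"
  proof -
    have "(\<Sum>p\<in>(Ot - S1) \<inter> S2. a p) \<le> (\<Sum>p\<in>S2. a p)"
      using finS2 S2P a0 by (intro sum_mono2) auto
    then show ?thesis using f_ge_A[OF S2P c2] F2 by linarith
  qed
  have A0: "(\<Sum>p\<in>Ot - S1 - S2. a p) \<le> F + D"
  proof -
    have each: "a z \<le> (F + D) / K" if "z \<in> Ot - S1 - S2" for z
    proof -
      have oP: "z \<in> P - (S1 \<union> S2)" using that Ot_def assms(8) by auto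
      have "inv1 S1 z" using I oP unfolding Inv_def by auto
      then have "K * a z - D \<le> f S1"
        using inv1_final[OF S1P _ _ _ c1] oP halt unfolding dg_halted_def by auto
      then have "K * a z \<le> F + D" using F1 by linarith
      moreover have "0 < K" using assms(2) by simp
      ultimately show ?thesis by (simp add: pos_le_divide_eq mult.commute)
    qed
    have "(\<Sum>p\<in>Ot - S1 - S2. a p) \<le> real (card (Ot - S1 - S2)) * ((F + D) / K)"
      using sum_bounded_above[of "Ot - S1 - S2" a "(F + D) / K"] each by simp
    also have "\<dots> \<le> K * ((F + D) / K)"
    proof (rule mult_right_mono)
      have "card (Ot - S1 - S2) \<le> card Ot" using finO by (intro card_mono) auto
      then show "real (card (Ot - S1 - S2)) \<le> K" using assms(9) Ot_def by simp
      show "0 \<le> (F + D) / K" using F0 D0 by simp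
    qed
    also have "\<dots> = F + D" using k1 by simp
    finally show ?thesis .
  qed
  have eqA: "(\<Sum>p\<in>Ot. a p) = (\<Sum>p\<in>Ot \<inter> S1. a p) + (\<Sum>p\<in>(Ot - S1) \<inter> S2. a p) + (\<Sum>p\<in>Ot - S1 - S2. a p)"
    using finO by (simp add: sum.Int_Diff[of Ot a S1] sum.Int_Diff[of "Ot - S1" a S2])
  have lin: "\<And>x y1 y2 y3 B :: real. x = y1 + y2 + y3 \<Longrightarrow> y1 \<le> B \<Longrightarrow> y2 \<le> B \<Longrightarrow> y3 \<le> B \<Longrightarrow> x \<le> 3 * B"
    by linarith
  have "(\<Sum>p\<in>Ot. a p) \<le> 3 * (F + D)" by (rule lin[OF eqA A1 A2 A0])
  moreover have "f Ot \<le> (\<Sum>p\<in>Ot. a p)" using f_le_A assms(8) Ot_def by simp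
  ultimately show ?thesis using F0 D0 unfolding F_def Ot_def by (rule lin2_aux)
qed

end
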